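(* Let there be two states and let $\mu\in(0,1)$. Suppose the updating rule respects the Blackwell order for $\mu$, and $\varphi=\varphi^{\mu}$ has a contractive error at some $x'\in(\mu,1]$ but produces no expansive error. Then there exists $x^*\in[\mu,x')$ such that $\varphi(x)=x^*$ for all $x\in[x^*,1)$; moreover $\varphi(x)=x$ for all $x\in[\mu,x^*]$ and $\varphi(1)\ge x^*$.
   Context: Two states $\Theta=\{0,1\}$; a belief is identified with the probability of state $1$, so the belief space is $\Delta=[0,1]$, and the prior $\mu\in(0,1)$. An experiment $\pi:\Theta\to\Delta(S)$ ($S$ finite) with prior $\mu$ induces the Bayesian distribution over posteriors $\rho_B$, a finitely supported distribution on $[0,1]$ with mean $\mu$ (every such distribution arises from some experiment). Blackwell order: $\pi\succeq\pi'$ iff $\rho_B'$ is a mean-preserving contraction of $\rho_B$. An updating rule is given, for each prior $\mu$, by a distortion function $\varphi^{\mu}:[0,1]\to[0,1]$: when the Bayesian posterior is $x$, the decision maker holds belief $\varphi^{\mu}(x)$. For a compact action set $A$, continuous $u:A\times\Theta\to\mathbb{R}$, and consistent choice $a^*:[0,1]\to A$ (i.e. $a^*(y)\in\arg\max_{a}\mathbb{E}_y u(a,\theta)$ for all $y$), let $W(x)=\mathbb{E}_x u(a^*(\varphi^{\mu}(x)),\theta)$. The rule respects the Blackwell order for $\mu$ if for all such $A,u,a^*$ and all $\pi\succeq\pi'$, $\mathbb{E}_{\rho_B}W\ge\mathbb{E}_{\rho_B'}W$. $\varphi$ has an expansive error at $x$ if $\varphi(x)$ is not on the closed segment between $x$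 and $\mu$, and a contractive error at $x$ if $\varphi(x)$ is on that segment and $\varphi(x)\ne x$. *)

theory Defs
  imports "HOL-Analysis.Analysis" "HOL-Probability.Probability"
begin

text \<open>Two states 0 and 1; a belief is the probability of state 1.
  Expected utility of action a at belief y: (1 - y) * u a 0 + y * u a 1.\<close>

definition exp_util :: "(real \<Rightarrow> nat \<Rightarrow> real) \<Rightarrow> real \<Rightarrow> real \<Rightarrow> real" where
  "exp_util u y a = (1 - y) * u a 0 + y * u a 1"

text \<open>Bayesian distribution over posteriors for prior mu: finitely supported
  distribution on [0,1] with mean mu (every such one arises from an experiment).\<close>

definition bayes_dist :: "real \<Rightarrow> real pmf \<Rightarrow> bool" where
  "bayes_dist mu \<rho> \<longleftrightarrow> finite (set_pmf \<rho>) \<and> set_pmf \<rho> \<subseteq> {0..1}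
      \<and> measure_pmf.expectation \<rho> (\<lambda>x. x) = mu"

definition mpc :: "real pmf \<Rightarrow> real pmf \<Rightarrow> bool" where
  "mpc \<rho>' \<rho> \<longleftrightarrow> (\<exists>K :: real \<Rightarrow> real pmf.
      (\<forall>y\<in>set_pmf \<rho>'. measure_pmf.expectation (K y) (\<lambda>x. x) = y)
      \<and> \<rho> = bind_pmf \<rho>' K)"

definition consistent_choice :: "real set \<Rightarrow> (real \<Rightarrow> nat \<Rightarrow> real) \<Rightarrow> (real \<Rightarrow> real) \<Rightarrow> bool" where
  "consistent_choice A u astar \<longleftrightarrow>
     (\<forall>y\<in>{0..1}. astar y \<in> A \<and> (\<forall>a\<in>A. exp_util u y a \<le> exp_util u y (astar y)))"

definition respects_blackwell :: "real \<Rightarrow> (real \<Rightarrow> real) \<Rightarrow> bool" where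
  "respects_blackwell mu \<phi> \<longleftrightarrow>
     (\<forall>(A :: real set) (u :: real \<Rightarrow> nat \<Rightarrow> real) (astar :: real \<Rightarrow> real).
        compact A \<and> continuous_on A (\<lambda>a. u a 0) \<and> continuous_on A (\<lambda>a. u a 1)
        \<and> consistent_choice A u astar \<longrightarrow>
        (\<forall>\<rho> \<rho>'. bayes_dist mu \<rho> \<and> bayes_dist mu \<rho>' \<and> mpc \<rho>' \<rho> \<longrightarrow>
           measure_pmf.expectation \<rho> (\<lambda>x. exp_util u x (astar (\<phi> x)))
           \<ge> measure_pmf.expectation \<rho>' (\<lambda>x. exp_util u x (astar (\<phi> x)))))"

definition expansive_error :: "real \<Rightarrow> (real \<Rightarrow> real) \<Rightarrow> real \<Rightarrow> bool" where
  "expansive_error mu \<phi> x \<longleftrightarrow> \<phi> x \<notin> closed_segment x mu"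

definition contractive_error :: "real \<Rightarrow> (real \<Rightarrow> real) \<Rightarrow> real \<Rightarrow> bool" where
  "contractive_error mu \<phi> x \<longleftrightarrow> \<phi> x \<in> closed_segment x mu \<and> \<phi> x \<noteq> x"

end

theory Submission imports Defs begin

lemma pmf_int_cong:
  fixes f g :: "'a \<Rightarrow> real"
  assumes "\<And>x. x \<in> set_pmf p \<Longrightarrow> f x = g x"
  shows "measure_pmf.expectation p f = measure_pmf.expectation p g"
  by (rule integral_cong_AE) (auto simp: AE_measure_pmf_iff assms)

lemma integral_bind_fin:
  fixes f :: "'a \<Rightarrow> real"
  assumes fin: "finite (set_pmf (bind_pmf M N))"
  shows "measure_pmf.expectation (bind_pmf M N) f = measure_pmf.expectation M (\<lambda>x. measure_pmf.expectation (N x) f)"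
proof -
  define U where "U = set_pmf (bind_pmf M N)"
  define g where "g = (\<lambda>y. if y \<in> U then f y else 0)"
  define B where "B = (\<Sum>y\<in>U. \<bar>f y\<bar>)"
  have gb: "\<bar>g y\<bar> \<le> B" for y
  proof (cases "y \<in> U")
    case True
    have "finite U" using fin by (simp add: U_def)
    with True show ?thesis unfolding g_def B_def
      by (simp, intro member_le_sum) auto
  next
    case False
    then show ?thesis unfolding g_def B_def by (simp add: sum_nonneg)
  qed
  have "measure_pmf.expectation (bind_pmf M N) f = measure_pmf.expectation (bind_pmf M N) g"
    by (rule pmf_int_cong) (simp add: g_def U_def)
  also have "\<dots> = measure_pmf.expectation M (\<lambda>x. measure_pmf.expectation (N x) g)"
    unfolding measure_pmf_bind
    by (rule integral_bind[where K="count_space UNIV" and B=B and B'=1])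
       (auto simp: gb measurable_pmf_measure2 prob_space_measure_pmf prob_space.finite_measure
          intro!: AE_I2 measure_pmf.emeasure_space_le_1 measurable_measure_pmf measure_pmf_in_subprob_algebra)
  also have "\<dots> = measure_pmf.expectation M (\<lambda>x. measure_pmf.expectation (N x) f)"
    by (rule pmf_int_cong, rule pmf_int_cong) (auto simp: g_def U_def)
  finally show ?thesis .
qed

definition tp :: "real \<Rightarrow> real \<Rightarrow> real \<Rightarrow> real pmf" where
  "tp p a b = map_pmf (\<lambda>c. if c then b else a) (bernoulli_pmf p)"

lemma tp_exp: "0 \<le> p \<Longrightarrow> p \<le> 1 \<Longrightarrow>
  measure_pmf.expectation (tp p a b) f = p * f b + (1 - p) * f a"
  unfolding tp_def by simp

lemma tp_set: "set_pmf (tp p a b) \<subseteq> {a, b}"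
  unfolding tp_def by auto

lemma mps_ineq:
  fixes f :: "real \<Rightarrow> real"
  assumes mu: "0 < mu" "mu < 1"
    and H: "\<forall>\<rho> \<rho>'. bayes_dist mu \<rho> \<and> bayes_dist mu \<rho>' \<and> mpc \<rho>' \<rho> \<longrightarrow>
           measure_pmf.expectation \<rho> f \<ge> measure_pmf.expectation \<rho>' f"
    and ab: "0 \<le> a" "a < y" "y < b" "b \<le> 1"
  shows "(b - a) * f y \<le> (b - y) * f a + (y - a) * f b"
proof -
  define p where "p = (y - a) / (b - a)"
  have p: "0 \<le> p" "p \<le> 1" using ab by (auto simp: p_def field_simps)
  define S where "S = tp p a b"
  have ES: "measure_pmf.expectation S g = p * g b + (1 - p) * g a" for g
    unfolding S_def using p by (rule tp_exp)
  have pb: "p * (b - a) = y - a" using ab by (simp add: p_def)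
  have pb2: "(1 - p) * (b - a) = b - y" using pb by (simp add: algebra_simps)
  have ESid: "measure_pmf.expectation S (\<lambda>x. x) = y"
    using ES[of "\<lambda>x. x"] pb by (simp add: algebra_simps)
  define z where "z = (if y > mu then 0 else (1::real))"
  define q where "q = (if y > mu then mu / y else (1 - mu) / (1 - y))"
  have zy: "z \<noteq> y" using ab mu by (auto simp: z_def)
  have q: "0 < q" "q \<le> 1" using ab mu by (auto simp: q_def field_simps)
  have qz: "q * y + (1 - q) * z = mu" using ab mu by (auto simp: q_def z_def field_simps)
  have z01: "0 \<le> z" "z \<le> 1" by (auto simp: z_def)
  define R' where "R' = tp q z y"
  define K where "K = (\<lambda>w. if w = y then S else return_pmf w)"
  define R where "R = bind_pmf R' K"
  have ER': "measure_pmf.expectation R' g = q * g y + (1 - q) * g z" for g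
    unfolding R'_def using q by (intro tp_exp) auto
  have setR: "set_pmf R \<subseteq> {a, b, z}"
    unfolding R_def R'_def K_def S_def using tp_set[of q z y] tp_set[of p a b] by (auto split: if_splits)
  have finR: "finite (set_pmf R)" using setR finite_subset by blast
  have ER: "measure_pmf.expectation R g = q * (p * g b + (1 - p) * g a) + (1 - q) * g z" for g
  proof -
    have "measure_pmf.expectation R g = measure_pmf.expectation R' (\<lambda>w. measure_pmf.expectation (K w) g)"
      unfolding R_def by (rule integral_bind_fin) (use finR R_def in simp)
    also have "\<dots> = q * (p * g b + (1 - p) * g a) + (1 - q) * g z"
      by (simp add: ER' K_def ES zy)
    finally show ?thesis .
  qed
  have bR: "bayes_dist mu R"
    unfolding bayes_dist_def using finR setR ab z01 ER[of "\<lambda>x. x"] ESid ES[of "\<lambda>x. x"] qz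
    by auto
  have bR': "bayes_dist mu R'"
    unfolding bayes_dist_def using tp_set[of q z y] ab z01 ER'[of "\<lambda>x. x"] qz
    by (auto simp: R'_def intro: finite_subset)
  have mR: "mpc R' R"
    unfolding mpc_def using tp_set[of q z y] ESid
    by (intro exI[of _ K]) (auto simp: K_def R_def R'_def)
  have "measure_pmf.expectation R f \<ge> measure_pmf.expectation R' f"
    using H bR bR' mR by blast
  then have "q * f y \<le> q * (p * f b + (1 - p) * f a)" by (simp add: ER ER')
  then have "f y \<le> p * f b + (1 - p) * f a" using q by simp
  then have "(b - a) * f y \<le> (b - a) * (p * f b + (1 - p) * f a)" using ab by simp
  also have "\<dots> = (p * (b - a)) * f b + ((1 - p) * (b - a)) * f a" by (simp add: algebra_simps)
  also have "\<dots> = (b - y) * f a + (y - a) * f b" by (simp only: pb pb2)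
  finally show ?thesis .
qed

lemma W_convex:
  fixes t :: real and \<phi> :: "real \<Rightarrow> real"
  assumes mu: "0 < mu" "mu < 1" and rb: "respects_blackwell mu \<phi>"
    and ab: "0 \<le> a" "a < y" "y < b" "b \<le> 1"
  defines "W \<equiv> (\<lambda>x. if \<phi> x > t then x - t else (0::real))"
  shows "(b - a) * W y \<le> (b - y) * W a + (y - a) * W b"
proof -
  define u :: "real \<Rightarrow> nat \<Rightarrow> real" where "u = (\<lambda>a n. a * (real n - t))"
  define A :: "real set" where "A = {0, 1}"
  define astar :: "real \<Rightarrow> real" where "astar = (\<lambda>y. if y > t then 1 else 0)"
  have eu: "exp_util u y c = c * (y - t)" for y c
    by (simp add: exp_util_def u_def algebra_simps)
  have cc: "consistent_choice A u astar"
    unfolding consistent_choice_def A_def astar_def eu by auto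
  have c0: "continuous_on A (\<lambda>a. u a 0)" "continuous_on A (\<lambda>a. u a 1)"
    unfolding u_def by (auto intro!: continuous_intros)
  have cA: "compact A" unfolding A_def by simp
  have fe: "(\<lambda>x. exp_util u x (astar (\<phi> x))) = W"
    unfolding W_def astar_def eu by (auto simp: fun_eq_iff)
  have H: "\<forall>\<rho> \<rho>'. bayes_dist mu \<rho> \<and> bayes_dist mu \<rho>' \<and> mpc \<rho>' \<rho> \<longrightarrow>
           measure_pmf.expectation \<rho> W \<ge> measure_pmf.expectation \<rho>' W"
    using rb cc c0 cA unfolding respects_blackwell_def fe[symmetric] by blast
  show ?thesis by (rule mps_ineq[OF mu H ab])
qed

lemma L1:
  assumes mu: "0 < mu" "mu < 1" and rb: "respects_blackwell mu \<phi>"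
    and h: "0 \<le> t" "t < y" "y < x" "x \<le> 1" "\<phi> y > t" "\<phi> x \<le> t"
  shows False
proof -
  have "(x - t) * (if \<phi> y > t then y - t else 0) \<le> (x - y) * (if \<phi> t > t then t - t else 0)
      + (y - t) * (if \<phi> x > t then x - t else 0)"
    using W_convex[OF mu rb, of t y x t] h by simp
  moreover have "(if \<phi> t > t then t - t else (0::real)) = 0" by simp
  ultimately have "(x - t) * (y - t) \<le> 0" using h by simp
  moreover have "(x - t) * (y - t) > 0" using h by simp
  ultimately show False by linarith
qed

lemma L2:
  assumes mu: "0 < mu" "mu < 1" and rb: "respects_blackwell mu \<phi>"
    and h: "0 \<le> t" "t < x" "x < y" "y < 1" "\<phi> x \<le> t" "\<phi> y > t"
  shows False
proof -
  have "(1 - x) * (if \<phi> y > t then y - t else 0) \<le> (1 - y) * (if \<phi> x > t then x - t else 0)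
      + (y - x) * (if \<phi> 1 > t then 1 - t else 0)"
    using W_convex[OF mu rb, of x y 1 t] h by simp
  then have "(1 - x) * (y - t) \<le> (y - x) * (if \<phi> 1 > t then 1 - t else 0)" using h by simp
  also have "\<dots> \<le> (y - x) * (1 - t)" using h by (intro mult_left_mono) auto
  finally have "(1 - x) * (y - t) \<le> (y - x) * (1 - t)" .
  moreover have "(1 - x) * (y - t) - (y - x) * (1 - t) = (x - t) * (1 - y)" by (simp add: algebra_simps)
  moreover have "(x - t) * (1 - y) > 0" using h by simp
  ultimately show False by linarith
qed

theorem lemma6:
  fixes mu :: real and \<phi> :: "real \<Rightarrow> real" and x' :: real
  assumes "0 < mu" and "mu < 1"
    and "\<forall>x\<in>{0..1}. \<phi> x \<in> {0..1}"
    and "respects_blackwell mu \<phi>"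
    and "x' \<in> {mu<..1}" and "contractive_error mu \<phi> x'"
    and "\<forall>x\<in>{0..1}. \<not> expansive_error mu \<phi> x"
  shows "\<exists>xs\<in>{mu..<x'}. (\<forall>x\<in>{xs..<1}. \<phi> x = xs) \<and> (\<forall>x\<in>{mu..xs}. \<phi> x = x) \<and> \<phi> 1 \<ge> xs"
proof -
  note mu = assms(1,2) and rb = assms(4)
  have seg: "min x mu \<le> \<phi> x \<and> \<phi> x \<le> max x mu" if "0 \<le> x" "x \<le> 1" for x
  proof -
    have "(x \<le> mu \<longrightarrow> x \<le> \<phi> x \<and> \<phi> x \<le> mu) \<and> (x \<le> mu \<or> mu \<le> \<phi> x \<and> \<phi> x \<le> x)"
      using assms(7) that by (auto simp: expansive_error_def closed_segment_eq_real_ivl split: if_splits)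
    then show ?thesis by (auto simp: min_def max_def)
  qed
  have segU: "mu \<le> \<phi> x" "\<phi> x \<le> x" if "mu \<le> x" "x \<le> 1" for x
    using seg[of x] that mu by auto
  have segL: "\<phi> x \<le> mu" if "0 \<le> x" "x \<le> mu" for x
    using seg[of x] that mu by auto
  have ctr: "\<phi> x \<noteq> x \<Longrightarrow> mu < x \<Longrightarrow> x \<le> 1 \<Longrightarrow> contractive_error mu \<phi> x" for x
    using assms(7) mu unfolding contractive_error_def expansive_error_def by auto
  obtain x1 where x1: "mu < x1" "x1 < 1" "contractive_error mu \<phi> x1" "x1 \<le> x'"
  proof (cases "x' < 1")
    case True then show ?thesis using that assms(5,6) by auto
  next
    case False
    then have x'1: "x' = 1" using assms(5) by auto
    show ?thesis
    proof (cases "\<exists>x. mu < x \<and> x < 1 \<and> \<phi> x \<noteq> x")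
      case True
      then obtain x where "mu < x" "x < 1" "\<phi> x \<noteq> x" by auto
      then show ?thesis using that ctr x'1 by auto
    next
      case False
      then have idm: "\<phi> x = x" if "mu < x" "x < 1" for x using that by auto
      have p1: "\<phi> 1 < 1" using assms(6) segU[of 1] mu x'1
        unfolding contractive_error_def by auto
      define t where "t = (max (\<phi> 1) mu + 1) / 2"
      define y where "y = (t + 1) / 2"
      have "t < y" "y < 1" "0 \<le> t" "\<phi> 1 \<le> t" "mu < t" using p1 mu by (auto simp: t_def y_def)
      moreover have "\<phi> y > t" using idm[of y] \<open>t < y\<close> \<open>y < 1\<close> \<open>mu < t\<close> by auto
      ultimately show ?thesis using L1[OF mu rb, of t y 1] by auto
    qed
  qed
  define xs where "xs = \<phi> x1"
  have xs: "mu \<le> xs" "xs < x1" using segU[of x1] x1 unfolding xs_def contractive_error_def by auto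
  have step1: "\<phi> y \<le> xs" if "0 \<le> y" "y < 1" for y
  proof (rule ccontr)
    assume "\<not> ?thesis"
    then have py: "\<phi> y > xs" by simp
    define t where "t = (xs + min (\<phi> y) x1) / 2"
    have t: "xs < t" "t < x1" "t < \<phi> y" using py xs by (auto simp: t_def)
    have "t < y"
    proof (cases "y \<le> mu")
      case True then show ?thesis using segL[of y] that t xs by auto
    next
      case False then show ?thesis using segU[of y] that t by auto
    qed
    have "0 \<le> t" using t xs mu by auto
    show False
    proof (cases y x1 rule: linorder_cases)
      case less then show ?thesis using L1[OF mu rb, of t y x1] t \<open>t < y\<close> \<open>0 \<le> t\<close> x1 xs_def by auto
    next
      case equal then show ?thesis using py xs_def by simp
    next
      case greater then show ?thesis using L2[OF mu rb, of t x1 y] t \<open>0 \<le> t\<close> x1 xs_def that by auto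
    qed
  qed
  have step2: "\<phi> x > t" if "mu \<le> t" "t < xs" "t < x" "x \<le> 1" for t x
  proof (rule ccontr)
    assume "\<not> ?thesis"
    then have px: "\<phi> x \<le> t" by simp
    have "0 \<le> t" using that mu by auto
    show False
    proof (cases x x1 rule: linorder_cases)
      case less then show ?thesis using L2[OF mu rb, of t x x1] that px \<open>0 \<le> t\<close> x1 xs_def by auto
    next
      case equal then show ?thesis using px that xs_def by simp
    next
      case greater then show ?thesis using L1[OF mu rb, of t x1 x] that px \<open>0 \<le> t\<close> x1 xs xs_def by auto
    qed
  qed
  have lower: "\<phi> x \<ge> xs" if "xs \<le> x" "x \<le> 1" for x
  proof (rule ccontr)
    assume "\<not> ?thesis"
    then have "\<phi> x < xs" by simp
    moreover have "mu \<le> \<phi> x" using segU[of x] that xs by auto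
    ultimately show False using step2[of "\<phi> x" x] that by auto
  qed
  have mid: "\<phi> x = x" if "mu \<le> x" "x \<le> xs" for x
  proof (rule ccontr)
    assume ne: "\<phi> x \<noteq> x"
    have "x < 1" using that xs x1 by auto
    then have "\<phi> x < x" "mu \<le> \<phi> x" using segU[of x] that ne by auto
    then show False using step2[of "\<phi> x" x] that \<open>x < 1\<close> by auto
  qed
  show ?thesis
  proof (rule bexI[of _ xs], intro conjI ballI)
    show "xs \<in> {mu..<x'}" using xs x1 by auto
  next
    fix x assume "x \<in> {xs..<1}"
    then show "\<phi> x = xs" using step1[of x] lower[of x] xs mu by auto
  next
    show "\<phi> 1 \<ge> xs" using lower[of 1] xs x1 by auto
  qed (use mid in auto)
qed

end
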